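(* Let $a\in\mathbb{D}$ and $\mathcal{T}\in\{\mathbb{T},\{a\}\}$. The set $K_0=\{(z_0,\eta_0,w_0)\in X_{\mathcal{T}}:\eta_0\notin\widehat{\mathrm{id}}^{-1}(z_0)\}$ is dense in $X_{\mathcal{T}}=\mathcal{T}\times\partial\widehat{H^\infty}\times\mathbb{T}$.
   Context: $\mathbb{D}$ is the open unit disc and $\mathbb{T}$ the unit circle. $H^\infty$ is the Banach algebra of bounded analytic functions on $\mathbb{D}$, $\mathcal{M}$ its maximal ideal space with the Gelfand (weak* ) topology (with $\mathbb{D}\subset\mathcal{M}$ via point evaluations), $\widehat{H^\infty}\subset C(\mathcal{M})$ the algebra of Gelfand transforms, and $\partial\widehat{H^\infty}$ its Shilov boundary. $\mathrm{id}$ is the identity function on $\mathbb{D}$ and $\widehat{\mathrm{id}}\colon\mathcal{M}\to\overline{\mathbb{D}}$ its Gelfand transform. $X_{\mathcal{T}}$ carries the product topology. *)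

theory Defs
  imports "HOL-Analysis.Analysis"
begin

text \<open>H-infinity: bounded holomorphic functions on the open unit disc. Each function
  is represented canonically by its values on the disc, extended by 0 outside.\<close>
definition Hinf :: "(complex \<Rightarrow> complex) set" where
  "Hinf = {f. f holomorphic_on ball 0 1 \<and> bounded (f ` ball 0 1)
              \<and> (\<forall>z. z \<notin> ball 0 1 \<longrightarrow> f z = 0)}"

definition one_D :: "complex \<Rightarrow> complex" where
  "one_D = (\<lambda>z. if z \<in> ball 0 1 then 1 else 0)"

definition id_D :: "complex \<Rightarrow> complex" where
  "id_D = (\<lambda>z. if z \<in> ball 0 1 then z else 0)"

text \<open>The weak* (Gelfand) topology is
  the subspace topology of the product topology on functionals.\<close>
definition MIS :: "((complex \<Rightarrow> complex) \<Rightarrow> complex) set" where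
  "MIS = {\<phi>. (\<forall>f\<in>Hinf. \<forall>g\<in>Hinf. \<phi> (\<lambda>z. f z + g z) = \<phi> f + \<phi> g)
            \<and> (\<forall>f\<in>Hinf. \<forall>c. \<phi> (\<lambda>z. c * f z) = c * \<phi> f)
            \<and> (\<forall>f\<in>Hinf. \<forall>g\<in>Hinf. \<phi> (\<lambda>z. f z * g z) = \<phi> f * \<phi> g)
            \<and> \<phi> one_D = 1
            \<and> (\<forall>f. f \<notin> Hinf \<longrightarrow> \<phi> f = 0)}"

text \<open>Gelfand transform of f evaluated at \<phi> is \<phi> f. A boundary of the algebra of
  Gelfand transforms: a closed subset of MIS on which every |f^| attains its maximum.\<close>
definition closed_boundary :: "((complex \<Rightarrow> complex) \<Rightarrow> complex) set \<Rightarrow> bool" where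
  "closed_boundary B \<longleftrightarrow> B \<subseteq> MIS \<and> closedin (top_of_set MIS) B \<and>
     (\<forall>f\<in>Hinf. \<exists>\<phi>\<in>B. \<forall>\<psi>\<in>MIS. norm (\<psi> f) \<le> norm (\<phi> f))"

definition shilov :: "((complex \<Rightarrow> complex) \<Rightarrow> complex) set" where
  "shilov = MIS \<inter> \<Inter> {B. closed_boundary B}"

end

theory Submission imports Defs "HOL-Complex_Analysis.Complex_Analysis" begin

definition ev :: "complex \<Rightarrow> (complex \<Rightarrow> complex) \<Rightarrow> complex" where
  "ev b = (\<lambda>f. if f \<in> Hinf then f b else 0)"

lemma Hinf_add: "f \<in> Hinf \<Longrightarrow> g \<in> Hinf \<Longrightarrow> (\<lambda>z. f z + g z) \<in> Hinf"
  unfolding Hinf_def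
proof (safe)
  assume a: "f holomorphic_on ball 0 1" "bounded (f ` ball 0 1)" "\<forall>z. z \<notin> ball 0 1 \<longrightarrow> f z = 0"
    "g holomorphic_on ball 0 1" "bounded (g ` ball 0 1)" "\<forall>z. z \<notin> ball 0 1 \<longrightarrow> g z = 0"
  show "(\<lambda>z. f z + g z) holomorphic_on ball 0 1" using a by (intro holomorphic_intros)
  from a obtain M N where "\<forall>x\<in>ball 0 1. norm (f x) \<le> M" "\<forall>x\<in>ball 0 1. norm (g x) \<le> N"
    by (auto simp: bounded_iff)
  then show "bounded ((\<lambda>z. f z + g z) ` ball 0 1)" unfolding bounded_iff
    by (intro exI[of _ "M+N"]) (auto intro: norm_triangle_le add_mono)
qed (auto)

lemma Hinf_mult: "f \<in> Hinf \<Longrightarrow> g \<in> Hinf \<Longrightarrow> (\<lambda>z. f z * g z) \<in> Hinf"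
  unfolding Hinf_def
proof (safe)
  assume a: "f holomorphic_on ball 0 1" "bounded (f ` ball 0 1)" "\<forall>z. z \<notin> ball 0 1 \<longrightarrow> f z = 0"
    "g holomorphic_on ball 0 1" "bounded (g ` ball 0 1)" "\<forall>z. z \<notin> ball 0 1 \<longrightarrow> g z = 0"
  show "(\<lambda>z. f z * g z) holomorphic_on ball 0 1" using a by (intro holomorphic_intros)
  from a obtain M N where "\<forall>x\<in>ball 0 1. norm (f x) \<le> M" "\<forall>x\<in>ball 0 1. norm (g x) \<le> N"
    by (auto simp: bounded_iff)
  then show "bounded ((\<lambda>z. f z * g z) ` ball 0 1)" unfolding bounded_iff
    by (intro exI[of _ "M*N"]) (auto simp: norm_mult intro: mult_mono order_trans[OF norm_ge_zero])
qed (auto)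

lemma one_D_Hinf: "one_D \<in> Hinf"
  unfolding Hinf_def one_D_def
proof (safe)
  show "(\<lambda>z. if z \<in> ball 0 1 then 1 else 0) holomorphic_on ball 0 1"
    by (rule holomorphic_transform[of "\<lambda>z. 1"]) auto
  show "bounded ((\<lambda>z. if z \<in> ball 0 1 then 1 else 0) ` ball (0::complex) 1)"
    by (rule bounded_subset[OF finite_imp_bounded[of "{1}"]]) auto
qed auto

lemma id_D_Hinf: "id_D \<in> Hinf"
  unfolding Hinf_def id_D_def
proof (safe)
  show "(\<lambda>z. if z \<in> ball 0 1 then z else 0) holomorphic_on ball 0 1"
    by (rule holomorphic_transform[of "\<lambda>z. z"]) auto
  show "bounded ((\<lambda>z. if z \<in> ball 0 1 then z else 0) ` ball (0::complex) 1)"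
    by (rule bounded_subset[OF bounded_ball[of 0 1]]) auto
qed auto

lemma Hinf_cmult: "f \<in> Hinf \<Longrightarrow> (\<lambda>z. c * f z) \<in> Hinf"
proof -
  assume f: "f \<in> Hinf"
  have "(\<lambda>z. c * one_D z) \<in> Hinf" unfolding Hinf_def one_D_def
  proof (safe)
    show "(\<lambda>z. c * (if z \<in> ball 0 1 then 1 else 0)) holomorphic_on ball 0 1"
      by (rule holomorphic_transform[of "\<lambda>z. c"]) auto
    show "bounded ((\<lambda>z. c * (if z \<in> ball 0 1 then 1 else 0)) ` ball (0::complex) 1)"
      by (rule bounded_subset[OF finite_imp_bounded[of "{c}"]]) auto
  qed auto
  from Hinf_mult[OF this f] have "(\<lambda>z. c * one_D z * f z) \<in> Hinf" .
  moreover have "(\<lambda>z. c * one_D z * f z) = (\<lambda>z. c * f z)"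
    using f by (auto simp: fun_eq_iff one_D_def Hinf_def)
  ultimately show ?thesis by simp
qed

lemma ev_MIS: "b \<in> ball 0 1 \<Longrightarrow> ev b \<in> MIS"
  unfolding MIS_def ev_def
  using Hinf_add Hinf_mult Hinf_cmult one_D_Hinf by (auto simp: one_D_def)

lemma Hinf_bound: "f \<in> Hinf \<Longrightarrow> \<exists>M. \<forall>z\<in>ball 0 1. norm (f z) \<le> M"
  unfolding Hinf_def by (auto simp: bounded_iff)

lemma Hinf_div:
  assumes f: "f \<in> Hinf" and b: "b \<in> ball 0 1"
  defines "g \<equiv> (\<lambda>z. if z \<in> ball 0 1 then (if z = b then deriv f b else (f z - f b) / (z - b)) else 0)"
  shows "g \<in> Hinf" "\<And>z. f z = f b * one_D z + (id_D z + (- b) * one_D z) * g z"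
proof -
  have hf: "f holomorphic_on ball 0 1" using f by (auto simp: Hinf_def)
  have hh: "(\<lambda>z. if z = b then deriv f b else (f z - f b) / (z - b)) holomorphic_on ball 0 1"
    by (rule pole_lemma_open[OF hf]) auto
  have hg: "g holomorphic_on ball 0 1"
    by (rule holomorphic_transform[OF hh]) (auto simp: g_def)
  obtain M where M: "\<forall>z\<in>ball 0 1. norm (f z) \<le> M" using Hinf_bound[OF f] by blast
  define \<delta> where "\<delta> = (1 - norm b) / 2"
  have \<delta>: "\<delta> > 0" using b unfolding \<delta>_def by auto
  have sub: "cball b \<delta> \<subseteq> ball 0 1"
  proof
    fix z assume "z \<in> cball b \<delta>"
    then have "norm z \<le> norm b + \<delta>" using norm_triangle_ineq2[of z b] by (auto simp: dist_norm norm_minus_commute)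
    moreover have "norm b < 1" using b by simp
    ultimately have "norm z < 1" unfolding \<delta>_def by (simp add: field_simps)
    then show "z \<in> ball 0 1" by simp
  qed
  have "compact (g ` cball b \<delta>)"
    by (rule compact_continuous_image[OF continuous_on_subset[OF holomorphic_on_imp_continuous_on[OF hg] sub]]) auto
  then have b1: "bounded (g ` cball b \<delta>)" by (rule compact_imp_bounded)
  have b2: "bounded (g ` (ball 0 1 - cball b \<delta>))"
    unfolding bounded_iff
  proof (intro exI[of _ "2 * M / \<delta>"] ballI)
    fix y assume "y \<in> g ` (ball 0 1 - cball b \<delta>)"
    then obtain z where z: "z \<in> ball 0 1" "z \<notin> cball b \<delta>" "y = g z" by auto
    have zb: "norm (z - b) \<ge> \<delta>" using z(2) by (auto simp: dist_norm norm_minus_commute)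
    have "norm (f z - f b) \<le> 2 * M"
    proof -
      have "norm (f z) \<le> M" "norm (f b) \<le> M" using M z(1) b by auto
      then show ?thesis using norm_triangle_ineq4[of "f z" "f b"] by linarith
    qed
    moreover have "z \<noteq> b" using z(2) \<delta> by auto
    ultimately have "norm y = norm (f z - f b) / norm (z - b)"
      using z by (simp add: g_def norm_divide)
    also have "\<dots> \<le> 2 * M / \<delta>"
      using \<open>norm (f z - f b) \<le> 2 * M\<close> zb \<delta>
    proof -
      have "norm (f b) \<le> M" using M b by auto
      then have "0 \<le> M" using norm_ge_zero[of "f b"] by linarith
      then show ?thesis using \<open>norm (f z - f b) \<le> 2 * M\<close> zb \<delta> by (intro frac_le) auto
    qed
    finally show "norm y \<le> 2 * M / \<delta>" .
  qed
  have "bounded (g ` ball 0 1)"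
    by (rule bounded_subset[OF bounded_Un[THEN iffD2, OF conjI[OF b1 b2]]]) auto
  then show "g \<in> Hinf" using hg by (auto simp: Hinf_def g_def)
  fix z
  show "f z = f b * one_D z + (id_D z + (- b) * one_D z) * g z"
  proof (cases "z \<in> ball 0 1")
    case True
    show ?thesis
    proof (cases "z = b")
      case True then show ?thesis using \<open>z \<in> ball 0 1\<close> by (simp add: g_def one_D_def id_D_def)
    next
      case False
      then have "z - b \<noteq> 0" by simp
      then show ?thesis using \<open>z \<in> ball 0 1\<close> by (simp add: g_def one_D_def id_D_def)
    qed
  next
    case False
    then show ?thesis using f by (auto simp: g_def one_D_def id_D_def Hinf_def)
  qed
qed

lemma MIS_eval:
  assumes \<phi>: "\<phi> \<in> MIS" and b: "b \<in> ball 0 1" and e: "\<phi> id_D = b" and f: "f \<in> Hinf"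
  shows "\<phi> f = f b"
proof -
  define g where "g \<equiv> (\<lambda>z. if z \<in> ball 0 1 then (if z = b then deriv f b else (f z - f b) / (z - b)) else 0)"
  have g: "g \<in> Hinf" and fe: "\<And>z. f z = f b * one_D z + (id_D z + (- b) * one_D z) * g z"
    using Hinf_div[OF f b] unfolding g_def by auto
  define A where "A = (\<lambda>z. f b * one_D z)"
  define C where "C = (\<lambda>z. (- b) * one_D z)"
  define D where "D = (\<lambda>z. id_D z + C z)"
  define E where "E = (\<lambda>z. D z * g z)"
  have fe': "f = (\<lambda>z. A z + E z)"
  proof (rule ext)
    fix z show "f z = A z + E z" unfolding A_def E_def D_def C_def by (rule fe)
  qed
  have h1: "A \<in> Hinf" "C \<in> Hinf"
    unfolding A_def C_def by (rule Hinf_cmult[OF one_D_Hinf])+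
  have h2: "D \<in> Hinf" unfolding D_def using Hinf_add[OF id_D_Hinf h1(2)] by simp
  have h3: "E \<in> Hinf" unfolding E_def using Hinf_mult[OF h2 g] by simp
  have P: "\<forall>f\<in>Hinf. \<forall>g\<in>Hinf. \<phi> (\<lambda>z. f z + g z) = \<phi> f + \<phi> g"
     "\<forall>f\<in>Hinf. \<forall>c. \<phi> (\<lambda>z. c * f z) = c * \<phi> f"
     "\<forall>f\<in>Hinf. \<forall>g\<in>Hinf. \<phi> (\<lambda>z. f z * g z) = \<phi> f * \<phi> g" "\<phi> one_D = 1"
    using \<phi> by (auto simp: MIS_def)
  have "\<phi> f = \<phi> A + \<phi> E"
    using P(1) h1(1) h3 fe' by metis
  also have "\<phi> A = f b"
    unfolding A_def using P(2) P(4) one_D_Hinf by auto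
  also have "\<phi> E = (\<phi> id_D + \<phi> C) * \<phi> g"
    unfolding E_def D_def using P(1)[rule_format, OF id_D_Hinf h1(2)] P(3)[rule_format, OF h2 g]
    by (simp add: D_def)
  also have "\<phi> C = - b * \<phi> one_D"
    unfolding C_def by (rule P(2)[rule_format, OF one_D_Hinf])
  also have "\<dots> = - b" using P(4) by simp
  finally show ?thesis using e by simp
qed

lemma MIS_const:
  assumes \<phi>: "\<phi> \<in> MIS" and f: "f \<in> Hinf" and c: "\<forall>z\<in>ball 0 1. f z = c"
  shows "\<phi> f = c"
proof -
  have "f = (\<lambda>z. c * one_D z)" using c f by (auto simp: fun_eq_iff one_D_def Hinf_def)
  then show ?thesis using \<phi> one_D_Hinf by (auto simp: MIS_def)
qed

lemma ev_apply: "f \<in> Hinf \<Longrightarrow> ev b f = f b"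
  by (simp add: ev_def)

lemma boundary_id_D:
  assumes "closed_boundary B"
  obtains \<phi> where "\<phi> \<in> B" "1 \<le> norm (\<phi> id_D)"
proof -
  obtain \<phi> where \<phi>: "\<phi> \<in> B" "\<forall>\<psi>\<in>MIS. norm (\<psi> id_D) \<le> norm (\<phi> id_D)"
    using assms id_D_Hinf unfolding closed_boundary_def by blast
  have "1 \<le> norm (\<phi> id_D)"
  proof (rule ccontr)
    assume "\<not> 1 \<le> norm (\<phi> id_D)"
    define r where "r = (1 + norm (\<phi> id_D)) / 2"
    have r: "norm (\<phi> id_D) < r" "r < 1" "0 \<le> r"
      using \<open>\<not> 1 \<le> norm (\<phi> id_D)\<close> norm_ge_zero[of "\<phi> id_D"] unfolding r_def by auto
    have rb: "complex_of_real r \<in> ball 0 1" using r by auto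
    have "norm (ev (complex_of_real r) id_D) \<le> norm (\<phi> id_D)"
      using \<phi>(2) ev_MIS[OF rb] by blast
    moreover have "ev (complex_of_real r) id_D = complex_of_real r"
      using rb unfolding ev_apply[OF id_D_Hinf] by (simp add: id_D_def)
    ultimately show False using r by auto
  qed
  then show ?thesis using that \<phi>(1) by blast
qed

lemma shilov_bound:
  assumes B: "closed_boundary B" and \<eta>: "\<eta> \<in> shilov"
  shows "1 \<le> norm (\<eta> id_D)"
proof -
  define B' where "B' = B \<inter> {\<phi>. 1 \<le> norm (\<phi> id_D)}"
  have BM: "B \<subseteq> MIS" "closedin (top_of_set MIS) B"
    and Bmax: "\<forall>f\<in>Hinf. \<exists>\<phi>\<in>B. \<forall>\<psi>\<in>MIS. norm (\<psi> f) \<le> norm (\<phi> f)"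
    using B unfolding closed_boundary_def by auto
  have cl: "closed {\<phi>::(complex\<Rightarrow>complex)\<Rightarrow>complex. 1 \<le> norm (\<phi> id_D)}"
    by (intro closed_Collect_le continuous_on_const continuous_on_norm continuous_on_product_coordinates)
  have "closedin (top_of_set MIS) (MIS \<inter> {\<phi>. 1 \<le> norm (\<phi> id_D)})"
    using cl by (simp add: closedin_closed_Int)
  then have "closedin (top_of_set MIS) (B \<inter> (MIS \<inter> {\<phi>. 1 \<le> norm (\<phi> id_D)}))"
    using BM(2) by (rule closedin_Int[rotated])
  moreover have "B \<inter> (MIS \<inter> {\<phi>. 1 \<le> norm (\<phi> id_D)}) = B'"
    using BM(1) unfolding B'_def by auto
  ultimately have cB': "closedin (top_of_set MIS) B'" by simp
  obtain \<phi>1 where \<phi>1: "\<phi>1 \<in> B" "1 \<le> norm (\<phi>1 id_D)" using boundary_id_D[OF B] by blast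
  have "\<exists>\<phi>\<in>B'. \<forall>\<psi>\<in>MIS. norm (\<psi> f) \<le> norm (\<phi> f)" if f: "f \<in> Hinf" for f
  proof -
    obtain \<phi> where \<phi>: "\<phi> \<in> B" "\<forall>\<psi>\<in>MIS. norm (\<psi> f) \<le> norm (\<phi> f)" using Bmax f by blast
    show ?thesis
    proof (cases "1 \<le> norm (\<phi> id_D)")
      case True then show ?thesis using \<phi> unfolding B'_def by blast
    next
      case False
      define b where "b = \<phi> id_D"
      have b: "b \<in> ball 0 1" using False unfolding b_def by auto
      have \<phi>M: "\<phi> \<in> MIS" using \<phi>(1) BM(1) by blast
      have fb: "\<phi> f = f b" using MIS_eval[OF \<phi>M b _ f] b_def by simp
      have "norm (f z) \<le> norm (f b)" if z: "z \<in> ball 0 1" for z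
        using \<phi>(2) ev_MIS[OF z] ev_apply[OF f, of z] fb by metis
      moreover have "f holomorphic_on ball 0 1" using f by (simp add: Hinf_def)
      ultimately have "f constant_on ball 0 1"
        using b by (intro maximum_modulus_principle[of f "ball 0 1" "ball 0 1" b]) auto
      then obtain c where c: "\<forall>z\<in>ball 0 1. f z = c" unfolding constant_on_def by blast
      have "\<phi>1 \<in> B'" using \<phi>1 unfolding B'_def by blast
      moreover have "\<forall>\<psi>\<in>MIS. norm (\<psi> f) \<le> norm (\<phi>1 f)"
      proof
        fix \<psi> assume p: "\<psi> \<in> MIS"
        have "\<phi>1 \<in> MIS" using \<phi>1(1) BM(1) by blast
        then show "norm (\<psi> f) \<le> norm (\<phi>1 f)" using MIS_const[OF p f c] MIS_const[OF _ f c] by simp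
      qed
      ultimately show ?thesis by blast
    qed
  qed
  then have "closed_boundary B'"
    using cB' BM(1) unfolding closed_boundary_def B'_def by auto
  then have "\<eta> \<in> B'" using \<eta> unfolding shilov_def by blast
  then show ?thesis unfolding B'_def by blast
qed

lemma continuous_ev: "continuous_on (ball 0 1) ev"
proof (rule continuous_on_coordinatewise_then_product)
  fix f :: "complex \<Rightarrow> complex"
  show "continuous_on (ball 0 1) (\<lambda>b. ev b f)"
  proof (cases "f \<in> Hinf")
    case True
    then have "continuous_on (ball 0 1) f"
      by (intro holomorphic_on_imp_continuous_on) (simp add: Hinf_def)
    then show ?thesis using True by (simp add: ev_def)
  qed (simp add: ev_def)
qed

lemma Im_exp_i: "Im (exp (\<i> * complex_of_real t)) = sin t"
  by (simp add: Im_exp)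

theorem lemma2p7:
  fixes a :: complex and \<T> :: "complex set"
  assumes "a \<in> ball 0 1"
    and "\<T> = sphere 0 1 \<or> \<T> = {a}"
  shows "\<T> \<times> shilov \<times> sphere (0::complex) 1 \<subseteq>
           closure {(z0, \<eta>0, w0). (z0, \<eta>0, w0) \<in> \<T> \<times> shilov \<times> sphere (0::complex) 1
                                   \<and> \<eta>0 id_D \<noteq> z0}"
proof
  fix x assume x: "x \<in> \<T> \<times> shilov \<times> sphere (0::complex) 1"
  define S where "S = {(z0, \<eta>0, w0). (z0, \<eta>0, w0) \<in> \<T> \<times> shilov \<times> sphere (0::complex) 1
                                   \<and> \<eta>0 id_D \<noteq> z0}"
  obtain z0 \<eta> w0 where xe: "x = (z0, \<eta>, w0)" and z0: "z0 \<in> \<T>" and \<eta>: "\<eta> \<in> shilov"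
    and w0: "w0 \<in> sphere 0 1" using x by auto
  have clS: "closed (closure S)" by simp
  show "x \<in> closure S"
  proof (cases "\<eta> id_D \<noteq> z0")
    case True
    then have "x \<in> S" using x xe unfolding S_def by auto
    then show ?thesis using closure_subset by blast
  next
    case False
    then have ez: "\<eta> id_D = z0" by simp
    show ?thesis
    proof (cases "\<T> = sphere 0 1")
      case True
      define s where "s n = z0 * exp (\<i> * complex_of_real (inverse (real (Suc n))))" for n
      have nz: "norm z0 = 1" using z0 True by simp
      have inS: "(s n, \<eta>, w0) \<in> S" for n
      proof -
        have "norm (s n) = 1" unfolding s_def using nz by (simp add: norm_mult)
        moreover have "s n \<noteq> z0"
        proof
          assume "s n = z0"
          then have "exp (\<i> * complex_of_real (inverse (real (Suc n)))) = 1"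
            using nz unfolding s_def by (metis mult_cancel_left1 norm_zero zero_neq_one)
          then have "Im (exp (\<i> * complex_of_real (inverse (real (Suc n))))) = 0" by simp
          moreover have "sin (inverse (real (Suc n))) > 0"
          proof (rule sin_gt_zero)
            show "0 < inverse (real (Suc n))" by simp
            have "inverse (real (Suc n)) \<le> 1" by (simp add: inverse_le_1_iff)
            then show "inverse (real (Suc n)) < pi" using pi_gt3 by linarith
          qed
          ultimately show False using Im_exp_i[of "inverse (real (Suc n))"] by simp
        qed
        ultimately show ?thesis using True \<eta> w0 ez unfolding S_def by auto
      qed
      have "s \<longlonglongrightarrow> z0 * exp (\<i> * complex_of_real 0)"
        unfolding s_def by (intro tendsto_intros LIMSEQ_inverse_real_of_nat)
      then have "s \<longlonglongrightarrow> z0" by simp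
      then have lim: "(\<lambda>n. (s n, \<eta>, w0)) \<longlonglongrightarrow> (z0, \<eta>, w0)"
        by (intro tendsto_Pair tendsto_const)
      have allin: "\<forall>n. (s n, \<eta>, w0) \<in> closure S" using inS closure_subset by blast
      show ?thesis unfolding xe
        by (rule Lim_in_closed_set[OF clS always_eventually[OF allin] trivial_limit_sequentially lim])
    next
      case False
      then have T: "\<T> = {a}" using assms(2) by blast
      then have za: "z0 = a" using z0 by simp
      have noB: "\<not> (\<exists>B. closed_boundary B)"
      proof
        assume "\<exists>B. closed_boundary B"
        then obtain B where "closed_boundary B" by blast
        from shilov_bound[OF this \<eta>] ez za assms(1) show False by simp
      qed
      then have shM: "shilov = MIS" unfolding shilov_def by auto
      have \<eta>M: "\<eta> \<in> MIS" using \<eta> shM by simp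
      have \<eta>e: "\<eta> = ev a"
      proof
        fix f show "\<eta> f = ev a f"
        proof (cases "f \<in> Hinf")
          case True
          then show ?thesis using MIS_eval[OF \<eta>M assms(1) _ True] ez za ev_apply[OF True] by simp
        next
          case False
          then show ?thesis using \<eta>M by (simp add: MIS_def ev_def)
        qed
      qed
      define r where "r = (1 - norm a) / 2"
      have r: "0 < r" "norm a + r < 1" using assms(1) unfolding r_def by (auto simp: field_simps)
      define bs where "bs n = a + complex_of_real (r * inverse (real (Suc n)))" for n
      have bsb: "bs n \<in> ball 0 1" for n
      proof -
        have "r * inverse (real (Suc n)) \<le> r * 1"
          using r by (intro mult_left_mono) (auto simp: inverse_le_1_iff)
        moreover have "norm (bs n) \<le> norm a + \<bar>r * inverse (real (Suc n))\<bar>"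
          unfolding bs_def using norm_triangle_ineq[of a "complex_of_real (r * inverse (real (Suc n)))"]
          by (simp only: norm_of_real)
        moreover have "\<bar>r * inverse (real (Suc n))\<bar> = r * inverse (real (Suc n))"
          using r(1) by simp
        ultimately have "norm (bs n) < 1" using r by linarith
        then show ?thesis by simp
      qed
      have bsa: "bs n \<noteq> a" for n
      proof -
        have "r * inverse (real (Suc n)) \<noteq> 0" using r(1) by simp
        then show ?thesis unfolding bs_def
          by (metis add.right_neutral add_left_cancel of_real_eq_0_iff)
      qed
      have "bs \<longlonglongrightarrow> a + complex_of_real (r * 0)"
        unfolding bs_def by (intro tendsto_intros LIMSEQ_inverse_real_of_nat)
      then have "bs \<longlonglongrightarrow> a" by simp
      then have "(\<lambda>n. ev (bs n)) \<longlonglongrightarrow> ev a"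
        using bsb assms(1) by (intro continuous_on_tendsto_compose[OF continuous_ev]) auto
      then have lim: "(\<lambda>n. (a, ev (bs n), w0)) \<longlonglongrightarrow> (a, ev a, w0)"
        by (intro tendsto_Pair tendsto_const)
      have inS: "(a, ev (bs n), w0) \<in> S" for n
        using T shM ev_MIS[OF bsb] w0 bsa ev_apply[OF id_D_Hinf, of "bs n"] bsb[of n]
        unfolding S_def by (simp add: id_D_def)
      have allin: "\<forall>n. (a, ev (bs n), w0) \<in> closure S" using inS closure_subset by blast
      show ?thesis unfolding xe za \<eta>e
        by (rule Lim_in_closed_set[OF clS always_eventually[OF allin] trivial_limit_sequentially lim])
    qed
  qed
qed

end
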